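(* Let $\psi(\bm{x},\bm{y})$ be a quantifier-free Presburger formula where $\bm{x}$ is a vector of $n$ variables and $\bm{y}$ a vector of $m$ variables, and let $\varphi$ be the sentence $\forall\bm{x}\,\exists\bm{y}\colon\psi(\bm{x},\bm{y})$. Let $\kappa(\bm{x},z_1,z_2)$ be the existential formula $\exists\bm{y}\colon\psi(\bm{x},\bm{y})\vee z_1=z_2$, with free variables $\bm{x},z_1,z_2$. Then $\kappa$ is monadically decomposable if and only if $\varphi$ is true.
   Context: Presburger formulas are over $\langle\mathbb{Z};+,<,(\equiv_m)_m,0,1\rangle$ with atoms $\sum a_ix_i\le b$ and $\sum a_ix_i\equiv b\pmod m$; quantifier-free formulas are Boolean combinations of atoms. A Presburger formula is monadic if each of its atoms contains at most one variable; a formula is monadically decomposable if it is equivalent over $\mathbb{Z}$ to a monadic Presburger formula. *)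

theory Defs
  imports Main "HOL-Number_Theory.Cong"
begin

text \<open>Variables are natural numbers; an assignment is a map nat => int.
  A linear term sum a_i x_i is given by its coefficient list a (coefficient a!i for variable i).\<close>

type_synonym assignment = "nat \<Rightarrow> int"

definition lin :: "int list \<Rightarrow> assignment \<Rightarrow> int" where
  "lin a v = (\<Sum>i<length a. a ! i * v i)"

datatype atom =
    Le "int list" int
  | Cong "int list" int nat

fun atom_vars :: "atom \<Rightarrow> nat set" where
  "atom_vars (Le a b) = {i. i < length a \<and> a ! i \<noteq> 0}"
| "atom_vars (Cong a b m) = {i. i < length a \<and> a ! i \<noteq> 0}"

fun atom_eval :: "atom \<Rightarrow> assignment \<Rightarrow> bool" where
  "atom_eval (Le a b) v = (lin a v \<le> b)"
| "atom_eval (Cong a b m) v = [lin a v = b] (mod int m)"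

datatype pform =
    TT | FF
  | Atom atom
  | Neg pform
  | Conj pform pform
  | Disj pform pform
  | Exi nat pform
  | All nat pform

fun eval :: "pform \<Rightarrow> assignment \<Rightarrow> bool" where
  "eval TT v = True"
| "eval FF v = False"
| "eval (Atom a) v = atom_eval a v"
| "eval (Neg f) v = (\<not> eval f v)"
| "eval (Conj f g) v = (eval f v \<and> eval g v)"
| "eval (Disj f g) v = (eval f v \<or> eval g v)"
| "eval (Exi i f) v = (\<exists>k::int. eval f (v(i := k)))"
| "eval (All i f) v = (\<forall>k::int. eval f (v(i := k)))"

fun atoms :: "pform \<Rightarrow> atom set" where
  "atoms TT = {}"
| "atoms FF = {}"
| "atoms (Atom a) = {a}"
| "atoms (Neg f) = atoms f"
| "atoms (Conj f g) = atoms f \<union> atoms g"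
| "atoms (Disj f g) = atoms f \<union> atoms g"
| "atoms (Exi i f) = atoms f"
| "atoms (All i f) = atoms f"

fun free_vars :: "pform \<Rightarrow> nat set" where
  "free_vars TT = {}"
| "free_vars FF = {}"
| "free_vars (Atom a) = atom_vars a"
| "free_vars (Neg f) = free_vars f"
| "free_vars (Conj f g) = free_vars f \<union> free_vars g"
| "free_vars (Disj f g) = free_vars f \<union> free_vars g"
| "free_vars (Exi i f) = free_vars f - {i}"
| "free_vars (All i f) = free_vars f - {i}"

fun quantifier_free :: "pform \<Rightarrow> bool" where
  "quantifier_free (Neg f) = quantifier_free f"
| "quantifier_free (Conj f g) = (quantifier_free f \<and> quantifier_free g)"
| "quantifier_free (Disj f g) = (quantifier_free f \<and> quantifier_free g)"
| "quantifier_free (Exi i f) = False"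
| "quantifier_free (All i f) = False"
| "quantifier_free _ = True"

definition monadic :: "pform \<Rightarrow> bool" where
  "monadic f \<longleftrightarrow> quantifier_free f \<and> (\<forall>a\<in>atoms f. card (atom_vars a) \<le> 1)"

definition equivalent :: "pform \<Rightarrow> pform \<Rightarrow> bool" where
  "equivalent f g \<longleftrightarrow> (\<forall>v. eval f v = eval g v)"

definition monadically_decomposable :: "pform \<Rightarrow> bool" where
  "monadically_decomposable f \<longleftrightarrow> (\<exists>g. monadic g \<and> equivalent f g)"

definition true_sentence :: "pform \<Rightarrow> bool" where
  "true_sentence f \<longleftrightarrow> (\<forall>v. eval f v)"

definition Exis :: "nat list \<Rightarrow> pform \<Rightarrow> pform" where
  "Exis xs f = foldr Exi xs f"

definition Alls :: "nat list \<Rightarrow> pform \<Rightarrow> pform" where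
  "Alls xs f = foldr All xs f"

text \<open>The formula x_i = x_j, as the conjunction x_i - x_j <= 0 and x_j - x_i <= 0.\<close>
definition eq_form :: "nat \<Rightarrow> nat \<Rightarrow> pform" where
  "eq_form i j =
     (let N = Suc (max i j);
          c = (\<lambda>p q. map (\<lambda>k. if k = p then 1 else if k = q then -1 else 0) [0..<N])
      in Conj (Atom (Le (c i j) 0)) (Atom (Le (c j i) 0)))"

end

theory Submission
  imports Defs
begin

lemma lin_cong: "(\<And>i. i < length a \<Longrightarrow> a ! i \<noteq> 0 \<Longrightarrow> v i = w i) \<Longrightarrow> lin a v = lin a w"
  unfolding lin_def by (rule sum.cong) auto

lemma atom_eval_cong: "(\<And>i. i \<in> atom_vars at \<Longrightarrow> v i = w i) \<Longrightarrow> atom_eval at v = atom_eval at w"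
proof (cases at)
  case (Le a b) assume h: "\<And>i. i \<in> atom_vars at \<Longrightarrow> v i = w i"
  have "lin a v = lin a w" by (rule lin_cong) (use h Le in auto)
  then show ?thesis using Le by simp
next
  case (Cong a b m) assume h: "\<And>i. i \<in> atom_vars at \<Longrightarrow> v i = w i"
  have "lin a v = lin a w" by (rule lin_cong) (use h Cong in auto)
  then show ?thesis using Cong by simp
qed

lemma eval_free_cong: "(\<And>i. i \<in> free_vars f \<Longrightarrow> v i = w i) \<Longrightarrow> eval f v = eval f w"
proof (induction f arbitrary: v w)
  case (Atom a) show ?case by simp (rule atom_eval_cong, simp add: Atom.prems)
next
  case (Neg f)
  have "eval f v = eval f w" by (rule Neg.IH) (simp add: Neg.prems)
  then show ?case by simp
next
  case (Conj f g)
  have "eval f v = eval f w" by (rule Conj.IH(1)) (simp add: Conj.prems)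
  moreover have "eval g v = eval g w" by (rule Conj.IH(2)) (simp add: Conj.prems)
  ultimately show ?case by simp
next
  case (Disj f g)
  have "eval f v = eval f w" by (rule Disj.IH(1)) (simp add: Disj.prems)
  moreover have "eval g v = eval g w" by (rule Disj.IH(2)) (simp add: Disj.prems)
  ultimately show ?case by simp
next
  case (Exi i f)
  have "eval f (v(i:=k)) = eval f (w(i:=k))" for k
    by (rule Exi.IH) (simp add: Exi.prems)
  then show ?case by simp
next
  case (All i f)
  have "eval f (v(i:=k)) = eval f (w(i:=k))" for k
    by (rule All.IH) (simp add: All.prems)
  then show ?case by simp
qed simp_all

lemma eval_atoms_cong: "quantifier_free g \<Longrightarrow> (\<And>at. at \<in> atoms g \<Longrightarrow> atom_eval at v = atom_eval at w) \<Longrightarrow> eval g v = eval g w"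
  by (induction g) auto

lemma finite_atoms: "finite (atoms g)"
  by (induction g) auto

lemma eval_Exis: "eval (Exis ys f) v \<longleftrightarrow> (\<exists>u. (\<forall>i. i \<notin> set ys \<longrightarrow> u i = v i) \<and> eval f u)"
proof (induction ys arbitrary: v)
  case Nil
  then show ?case by (auto simp: Exis_def fun_eq_iff)
next
  case (Cons y ys)
  have "eval (Exis (y#ys) f) v \<longleftrightarrow> (\<exists>k. eval (Exis ys f) (v(y:=k)))"
    by (simp add: Exis_def)
  also have "\<dots> \<longleftrightarrow> (\<exists>u. (\<forall>i. i \<notin> set (y#ys) \<longrightarrow> u i = v i) \<and> eval f u)"
  proof
    assume "\<exists>k. eval (Exis ys f) (v(y:=k))"
    then obtain k u where h: "\<forall>i. i \<notin> set ys \<longrightarrow> u i = (v(y:=k)) i" "eval f u"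
      using Cons.IH by blast
    then show "\<exists>u. (\<forall>i. i \<notin> set (y#ys) \<longrightarrow> u i = v i) \<and> eval f u"
      by (intro exI[of _ u]) auto
  next
    assume "\<exists>u. (\<forall>i. i \<notin> set (y#ys) \<longrightarrow> u i = v i) \<and> eval f u"
    then obtain u where u: "\<forall>i. i \<notin> set (y#ys) \<longrightarrow> u i = v i" "eval f u" by blast
    have "\<forall>i. i \<notin> set ys \<longrightarrow> u i = (v(y:=u y)) i" using u(1) by auto
    then have "eval (Exis ys f) (v(y:=u y))" using Cons.IH u(2) by blast
    then show "\<exists>k. eval (Exis ys f) (v(y:=k))" by blast
  qed
  finally show ?case .
qed

lemma eval_Alls: "eval (Alls ys f) v \<Longrightarrow> eval f v"
proof (induction ys arbitrary: v)
  case Nil then show ?case by (simp add: Alls_def)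
next
  case (Cons y ys)
  then have "\<forall>k. eval (Alls ys f) (v(y:= k))" by (simp add: Alls_def)
  then have "eval (Alls ys f) (v(y:= v y))" by blast
  then show ?case using Cons.IH by simp
qed

lemma not_Alls: "\<not> eval (Alls ys f) v \<Longrightarrow> \<exists>u. \<not> eval f u"
proof (induction ys arbitrary: v)
  case Nil then show ?case by (auto simp: Alls_def)
next
  case (Cons y ys)
  then obtain k where "\<not> eval (Alls ys f) (v(y:=k))" by (auto simp: Alls_def)
  then show ?case using Cons.IH by blast
qed

lemma eval_eq_form: assumes "i \<noteq> j" shows "eval (eq_form i j) v \<longleftrightarrow> v i = v j"
proof -
  have L: "lin (map (\<lambda>k. if k = p then 1 else if k = q then -1 else 0) [0..<N]) v = v p - v q"
    if "p < N" "q < N" "p \<noteq> q" for p q N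
  proof -
    have "lin (map (\<lambda>k. if k = p then 1 else if k = q then -1 else 0) [0..<N]) v
       = (\<Sum>k<N. (if k = p then v k else 0) + (if k = q then - v k else 0))"
      unfolding lin_def by (rule sum.cong) (use that in auto)
    also have "\<dots> = v p - v q" using that by (simp add: sum.distrib)
    finally show ?thesis .
  qed
  define N where "N = Suc (max i j)"
  have iN: "i < N" "j < N" by (auto simp: N_def)
  have A: "eval (eq_form i j) v =
    (lin (map (\<lambda>k. if k = i then 1 else if k = j then -1 else 0) [0..<N]) v \<le> 0 \<and>
     lin (map (\<lambda>k. if k = j then 1 else if k = i then -1 else 0) [0..<N]) v \<le> 0)"
    by (simp only: eq_form_def Let_def N_def eval.simps atom_eval.simps)
  show ?thesis unfolding A L[OF iN assms] L[OF iN(2,1) assms[symmetric]] by linarith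
qed

theorem mainTheorem13:
  fixes n m :: nat and \<psi> :: pform
  assumes "quantifier_free \<psi>"
    and "free_vars \<psi> \<subseteq> {..<n+m}"
  shows "monadically_decomposable
           (Exis [n..<n+m] (Disj \<psi> (eq_form (n+m) (n+m+1))))
         \<longleftrightarrow> true_sentence (Alls [0..<n] (Exis [n..<n+m] \<psi>))"
proof
  assume md: "monadically_decomposable (Exis [n..<n+m] (Disj \<psi> (eq_form (n+m) (n+m+1))))"
  show "true_sentence (Alls [0..<n] (Exis [n..<n+m] \<psi>))"
  proof (rule ccontr)
    assume "\<not> true_sentence (Alls [0..<n] (Exis [n..<n+m] \<psi>))"
    then obtain v where "\<not> eval (Alls [0..<n] (Exis [n..<n+m] \<psi>)) v"
      unfolding true_sentence_def by blast
    then obtain u where nu: "\<not> eval (Exis [n..<n+m] \<psi>) u" using not_Alls by blast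
    define z1 where "z1 = n+m"
    define z2 where "z2 = n+m+1"
    obtain g where g: "monadic g" "equivalent (Exis [n..<n+m] (Disj \<psi> (eq_form (n+m) (n+m+1)))) g"
      using md unfolding monadically_decomposable_def by blast
    define F where "F = (\<lambda>c::int. {at \<in> atoms g. atom_eval at (u(z1:=0, z2:=c))})"
    have "finite (range F)"
      by (rule finite_subset[of _ "Pow (atoms g)"]) (auto simp: F_def finite_atoms)
    then have "\<not> inj F" using finite_imageD infinite_UNIV_int by blast
    then obtain a b where ab: "a \<noteq> b" "F a = F b" unfolding inj_def by blast
    define w1 where "w1 = u(z1:=a, z2:=a)"
    define w2 where "w2 = u(z1:=a, z2:=b)"
    have ag: "atom_eval at w1 = atom_eval at w2" if at: "at \<in> atoms g" for at
    proof (cases "z2 \<in> atom_vars at")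
      case False
      then show ?thesis by (intro atom_eval_cong) (auto simp: w1_def w2_def)
    next
      case True
      have fin: "finite (atom_vars at)" by (cases at) auto
      have "card (atom_vars at) \<le> 1" using g(1) at unfolding monadic_def by blast
      then have "\<forall>i\<in>atom_vars at. i = z2" using True fin
        by (metis One_nat_def card_le_Suc0_iff_eq)
      then have "atom_eval at w1 = atom_eval at (u(z1:=0, z2:=a))"
        "atom_eval at w2 = atom_eval at (u(z1:=0, z2:=b))"
        by (auto intro!: atom_eval_cong simp: w1_def w2_def)
      moreover have "atom_eval at (u(z1:=0, z2:=a)) = atom_eval at (u(z1:=0, z2:=b))"
        using ab(2) at unfolding F_def by (auto simp: set_eq_iff)
      ultimately show ?thesis by simp
    qed
    have "eval g w1 = eval g w2"
      by (rule eval_atoms_cong) (use g(1) ag in \<open>auto simp: monadic_def\<close>)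
    moreover have "eval (Exis [n..<n+m] (Disj \<psi> (eq_form (n+m) (n+m+1)))) w1"
      unfolding eval_Exis
      by (rule exI[of _ "u(z1:=a, z2:=a)"]) (auto simp: w1_def z1_def z2_def eval_eq_form)
    moreover have "\<not> eval (Exis [n..<n+m] (Disj \<psi> (eq_form (n+m) (n+m+1)))) w2"
    proof
      assume "eval (Exis [n..<n+m] (Disj \<psi> (eq_form (n+m) (n+m+1)))) w2"
      then obtain u' where u': "\<forall>i. i \<notin> set [n..<n+m] \<longrightarrow> u' i = w2 i"
        "eval \<psi> u' \<or> eval (eq_form (n+m) (n+m+1)) u'"
        unfolding eval_Exis by auto
      have "u' z1 = a" "u' z2 = b" using u'(1) by (auto simp: z1_def z2_def w2_def)
      then have "\<not> eval (eq_form (n+m) (n+m+1)) u'" using ab(1)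
        by (simp add: eval_eq_form z1_def z2_def)
      then have "eval \<psi> u'" using u'(2) by blast
      define u'' where "u'' = u'(z1 := u z1, z2 := u z2)"
      have "eval \<psi> u'' = eval \<psi> u'"
        by (rule eval_free_cong) (use assms(2) in \<open>auto simp: u''_def z1_def z2_def\<close>)
      moreover have "\<forall>i. i \<notin> set [n..<n+m] \<longrightarrow> u'' i = u i"
        using u'(1) by (auto simp: u''_def w2_def)
      ultimately show False using nu \<open>eval \<psi> u'\<close> unfolding eval_Exis by blast
    qed
    ultimately show False using g(2) unfolding equivalent_def by blast
  qed
next
  assume ts: "true_sentence (Alls [0..<n] (Exis [n..<n+m] \<psi>))"
  have "monadic TT" by (simp add: monadic_def)
  moreover have "equivalent (Exis [n..<n+m] (Disj \<psi> (eq_form (n+m) (n+m+1)))) TT"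
    unfolding equivalent_def
  proof
    fix v
    have "eval (Exis [n..<n+m] \<psi>) v" using ts eval_Alls unfolding true_sentence_def by blast
    then obtain u where "\<forall>i. i \<notin> set [n..<n+m] \<longrightarrow> u i = v i" "eval \<psi> u"
      unfolding eval_Exis by blast
    then have "eval (Exis [n..<n+m] (Disj \<psi> (eq_form (n+m) (n+m+1)))) v"
      unfolding eval_Exis eval.simps by blast
    then show "eval (Exis [n..<n+m] (Disj \<psi> (eq_form (n+m) (n+m+1)))) v = eval TT v"
      by simp
  qed
  ultimately show "monadically_decomposable (Exis [n..<n+m] (Disj \<psi> (eq_form (n+m) (n+m+1))))"
    unfolding monadically_decomposable_def by blast
qed

end
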